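(* Let $\varphi_1,\dots,\varphi_m: L\to L'$ and $\psi_1,\dots,\psi_m: N\to N'$ be simplicial maps between simplicial complexes. Assume $\beta: N\to L$ and $\alpha: L'\to N'$ are strong equivalences and that $\alpha\circ\varphi_i\circ\beta\sim\psi_i$ for all $i=1,\dots,m$. Then $\mathrm{SD}(\varphi_1,\dots,\varphi_m)=\mathrm{SD}(\psi_1,\dots,\psi_m)$.
   Context: Simplicial maps $f,g: K\to K'$ are contiguous if $f(\sigma)\cup g(\sigma)$ is a simplex for every simplex $\sigma$ of $K$; $f\sim g$ (same contiguity class) if they are joined by a finite chain of simplicial maps with consecutive ones contiguous. A simplicial map $f: K\to K'$ is a strong equivalence if there is a simplicial map $g: K'\to K$ with $f\circ g\sim 1_{K'}$ and $g\circ f\sim 1_K$. For simplicial maps $\varphi_1,\dots,\varphi_m: K\to K'$, $\mathrm{SD}(\varphi_1,\dots,\varphi_m)$ is the least $n\ge0$ such that $K$ is a union of subcomplexes $K_0,\dots,K_n$ with $\varphi_i|_{K_k}\sim\varphi_j|_{K_k}$ for all $i,j,k$. *)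

theory Defs
  imports Main "HOL-Library.Extended_Nat"
begin

definition simplicial_complex :: "'a set set \<Rightarrow> bool" where
  "simplicial_complex K \<longleftrightarrow>
     (\<forall>\<sigma>\<in>K. finite \<sigma> \<and> \<sigma> \<noteq> {}) \<and>
     (\<forall>\<sigma>\<in>K. \<forall>\<tau>. \<tau> \<subseteq> \<sigma> \<and> \<tau> \<noteq> {} \<longrightarrow> \<tau> \<in> K)"

definition simplicial_map :: "'a set set \<Rightarrow> 'b set set \<Rightarrow> ('a \<Rightarrow> 'b) \<Rightarrow> bool" where
  "simplicial_map K K' f \<longleftrightarrow> (\<forall>\<sigma>\<in>K. f ` \<sigma> \<in> K')"

definition contiguous :: "'a set set \<Rightarrow> 'b set set \<Rightarrow> ('a \<Rightarrow> 'b) \<Rightarrow> ('a \<Rightarrow> 'b) \<Rightarrow> bool" where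
  "contiguous K K' f g \<longleftrightarrow> (\<forall>\<sigma>\<in>K. f ` \<sigma> \<union> g ` \<sigma> \<in> K')"

definition contiguity_class :: "'a set set \<Rightarrow> 'b set set \<Rightarrow> ('a \<Rightarrow> 'b) \<Rightarrow> ('a \<Rightarrow> 'b) \<Rightarrow> bool" where
  "contiguity_class K K' f g \<longleftrightarrow> simplicial_map K K' f \<and>
     (\<lambda>h1 h2. simplicial_map K K' h1 \<and> simplicial_map K K' h2 \<and> contiguous K K' h1 h2)\<^sup>*\<^sup>* f g"

definition strong_equivalence :: "'a set set \<Rightarrow> 'b set set \<Rightarrow> ('a \<Rightarrow> 'b) \<Rightarrow> bool" where
  "strong_equivalence K K' f \<longleftrightarrow> simplicial_map K K' f \<and>
     (\<exists>g. simplicial_map K' K g \<and> contiguity_class K' K' (f \<circ> g) id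
                              \<and> contiguity_class K K (g \<circ> f) id)"

definition subcomplex :: "'a set set \<Rightarrow> 'a set set \<Rightarrow> bool" where
  "subcomplex K0 K \<longleftrightarrow> simplicial_complex K0 \<and> K0 \<subseteq> K"

definition SD_cover :: "'a set set \<Rightarrow> 'b set set \<Rightarrow> nat \<Rightarrow> (nat \<Rightarrow> 'a \<Rightarrow> 'b) \<Rightarrow> nat \<Rightarrow> bool" where
  "SD_cover K K' m \<phi> n \<longleftrightarrow> (\<exists>Ks :: nat \<Rightarrow> 'a set set.
      (\<forall>k\<le>n. subcomplex (Ks k) K) \<and> K = (\<Union>k\<le>n. Ks k) \<and>
      (\<forall>k\<le>n. \<forall>i\<in>{1..m}. \<forall>j\<in>{1..m}. contiguity_class (Ks k) K' (\<phi> i) (\<phi> j)))"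

definition SD :: "'a set set \<Rightarrow> 'b set set \<Rightarrow> nat \<Rightarrow> (nat \<Rightarrow> 'a \<Rightarrow> 'b) \<Rightarrow> enat" where
  "SD K K' m \<phi> = (if \<exists>n. SD_cover K K' m \<phi> n then enat (LEAST n. SD_cover K K' m \<phi> n) else \<infinity>)"

end

theory Submission
  imports Defs
begin

lemma cc_simp2: "contiguity_class K K' f g \<Longrightarrow> simplicial_map K K' g"
  unfolding contiguity_class_def
  by (metis (no_types, lifting) rtranclp.cases)

lemma cc_refl: "simplicial_map K K' f \<Longrightarrow> contiguity_class K K' f f"
  unfolding contiguity_class_def by auto

lemma cc_trans: "contiguity_class K K' f g \<Longrightarrow> contiguity_class K K' g h \<Longrightarrow> contiguity_class K K' f h"
  unfolding contiguity_class_def by (meson rtranclp_trans)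

lemma cc_sym: assumes "contiguity_class K K' f g" shows "contiguity_class K K' g f"
proof -
  let ?R = "\<lambda>h1 h2. simplicial_map K K' h1 \<and> simplicial_map K K' h2 \<and> contiguous K K' h1 h2"
  have "?R\<^sup>*\<^sup>* f g" using assms unfolding contiguity_class_def by auto
  then have "?R\<^sup>*\<^sup>* g f"
  proof (induction rule: rtranclp_induct)
    case base then show ?case by simp
  next
    case (step y z)
    have "?R z y" using step(2) unfolding contiguous_def by (auto simp: Un_commute)
    show ?case by (rule converse_rtranclp_into_rtranclp[where r = ?R, OF \<open>?R z y\<close> step.IH])
  qed
  then show ?thesis using cc_simp2[OF assms] unfolding contiguity_class_def by auto
qed

lemma cc_mono: assumes "contiguity_class K K' f g" "K0 \<subseteq> K" shows "contiguity_class K0 K' f g"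
proof -
  let ?R = "\<lambda>h1 h2. simplicial_map K K' h1 \<and> simplicial_map K K' h2 \<and> contiguous K K' h1 h2"
  let ?S = "\<lambda>h1 h2. simplicial_map K0 K' h1 \<and> simplicial_map K0 K' h2 \<and> contiguous K0 K' h1 h2"
  have "?R\<^sup>*\<^sup>* f g" using assms unfolding contiguity_class_def by auto
  moreover have "?R x y \<Longrightarrow> ?S x y" for x y using assms(2)
    unfolding simplicial_map_def contiguous_def by auto
  ultimately have "?S\<^sup>*\<^sup>* f g"
  proof (induction rule: rtranclp_induct)
    case base then show ?case by simp
  next
    case (step y z)
    have "?S y z" using step by blast
    show ?case by (rule rtranclp.rtrancl_into_rtrancl[where r = ?S, OF step(3)[OF step(4)] \<open>?S y z\<close>])
  qed
  then show ?thesis using assms unfolding contiguity_class_def simplicial_map_def by auto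
qed

lemma cc_right: assumes "contiguity_class K K' f g" "simplicial_map K0 K h"
  shows "contiguity_class K0 K' (f \<circ> h) (g \<circ> h)"
proof -
  let ?R = "\<lambda>h1 h2. simplicial_map K K' h1 \<and> simplicial_map K K' h2 \<and> contiguous K K' h1 h2"
  let ?S = "\<lambda>h1 h2. simplicial_map K0 K' h1 \<and> simplicial_map K0 K' h2 \<and> contiguous K0 K' h1 h2"
  have "?R\<^sup>*\<^sup>* f g" using assms unfolding contiguity_class_def by auto
  then have "?S\<^sup>*\<^sup>* (f \<circ> h) (g \<circ> h)"
  proof (induction rule: rtranclp_induct)
    case base then show ?case by simp
  next
    case (step y z)
    have "?S (y \<circ> h) (z \<circ> h)" using step(2) assms(2)
      unfolding contiguous_def simplicial_map_def by (metis image_Un image_comp)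
    show ?case by (rule rtranclp.rtrancl_into_rtrancl[where r = ?S, OF step.IH \<open>?S (y \<circ> h) (z \<circ> h)\<close>])
  qed
  moreover have "simplicial_map K0 K' (f \<circ> h)" using assms unfolding contiguity_class_def simplicial_map_def
    by (metis image_comp)
  ultimately show ?thesis unfolding contiguity_class_def by auto
qed

lemma cc_left: assumes "contiguity_class K K' f g" "simplicial_map K' K'' h"
  shows "contiguity_class K K'' (h \<circ> f) (h \<circ> g)"
proof -
  let ?R = "\<lambda>h1 h2. simplicial_map K K' h1 \<and> simplicial_map K K' h2 \<and> contiguous K K' h1 h2"
  let ?S = "\<lambda>h1 h2. simplicial_map K K'' h1 \<and> simplicial_map K K'' h2 \<and> contiguous K K'' h1 h2"
  have "?R\<^sup>*\<^sup>* f g" using assms unfolding contiguity_class_def by auto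
  then have "?S\<^sup>*\<^sup>* (h \<circ> f) (h \<circ> g)"
  proof (induction rule: rtranclp_induct)
    case base then show ?case by simp
  next
    case (step y z)
    have "?S (h \<circ> y) (h \<circ> z)" using step(2) assms(2)
      unfolding contiguous_def simplicial_map_def
      by (metis image_Un image_comp)
    show ?case by (rule rtranclp.rtrancl_into_rtrancl[where r = ?S, OF step.IH \<open>?S (h \<circ> y) (h \<circ> z)\<close>])
  qed
  moreover have "simplicial_map K K'' (h \<circ> f)" using assms unfolding contiguity_class_def simplicial_map_def
    by (metis image_comp)
  ultimately show ?thesis unfolding contiguity_class_def by auto
qed

lemma transfer_cover:
  assumes N: "simplicial_complex N"
    and phi: "\<forall>i\<in>{1..m}. simplicial_map L L' (\<phi> i)"
    and b: "simplicial_map N L \<beta>" and a: "simplicial_map L' N' \<alpha>"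
    and h: "\<forall>i\<in>{1..m}. contiguity_class N N' (\<alpha> \<circ> \<phi> i \<circ> \<beta>) (\<psi> i)"
    and c: "SD_cover L L' m \<phi> n"
  shows "SD_cover N N' m \<psi> n"
proof -
  obtain Ks where Ks: "\<forall>k\<le>n. subcomplex (Ks k) L" "L = (\<Union>k\<le>n. Ks k)"
    "\<forall>k\<le>n. \<forall>i\<in>{1..m}. \<forall>j\<in>{1..m}. contiguity_class (Ks k) L' (\<phi> i) (\<phi> j)"
    using c unfolding SD_cover_def by blast
  define Ns where "Ns k = {\<sigma>\<in>N. \<beta> ` \<sigma> \<in> Ks k}" for k
  have sub: "subcomplex (Ns k) N" if "k \<le> n" for k
  proof -
    have "simplicial_complex (Ks k)" using Ks(1) that unfolding subcomplex_def by auto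
    then have Kc: "\<And>\<sigma> \<tau>. \<sigma> \<in> Ks k \<Longrightarrow> \<tau> \<subseteq> \<sigma> \<Longrightarrow> \<tau> \<noteq> {} \<Longrightarrow> \<tau> \<in> Ks k"
      unfolding simplicial_complex_def by blast
    have Nc: "\<And>\<sigma> \<tau>. \<sigma> \<in> N \<Longrightarrow> \<tau> \<subseteq> \<sigma> \<Longrightarrow> \<tau> \<noteq> {} \<Longrightarrow> \<tau> \<in> N"
      and Nf: "\<And>\<sigma>. \<sigma> \<in> N \<Longrightarrow> finite \<sigma> \<and> \<sigma> \<noteq> {}"
      using N unfolding simplicial_complex_def by blast+
    have "\<tau> \<in> Ns k" if "\<sigma> \<in> Ns k" "\<tau> \<subseteq> \<sigma>" "\<tau> \<noteq> {}" for \<sigma> \<tau>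
    proof -
      have "\<sigma> \<in> N" "\<beta> ` \<sigma> \<in> Ks k" using that(1) unfolding Ns_def by auto
      moreover have "\<beta> ` \<tau> \<subseteq> \<beta> ` \<sigma>" using that(2) by (rule image_mono)
      moreover have "\<beta> ` \<tau> \<noteq> {}" using that(3) by simp
      ultimately show ?thesis using Kc Nc that unfolding Ns_def by blast
    qed
    moreover have "Ns k \<subseteq> N" unfolding Ns_def by blast
    ultimately show ?thesis using Nf unfolding subcomplex_def simplicial_complex_def by blast
  qed
  have un: "N = (\<Union>k\<le>n. Ns k)"
  proof
    show "N \<subseteq> (\<Union>k\<le>n. Ns k)" using b Ks(2) unfolding simplicial_map_def Ns_def by blast
  qed (auto simp: Ns_def)
  have bk: "simplicial_map (Ns k) (Ks k) \<beta>" for k unfolding Ns_def simplicial_map_def by auto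
  have "contiguity_class (Ns k) N' (\<psi> i) (\<psi> j)" if "k \<le> n" "i \<in> {1..m}" "j \<in> {1..m}" for k i j
  proof -
    have "Ns k \<subseteq> N" unfolding Ns_def by auto
    have hi: "contiguity_class (Ns k) N' (\<psi> i) (\<alpha> \<circ> \<phi> i \<circ> \<beta>)"
      using cc_sym[OF cc_mono[OF h[rule_format, OF that(2)] \<open>Ns k \<subseteq> N\<close>]] .
    have hj: "contiguity_class (Ns k) N' (\<alpha> \<circ> \<phi> j \<circ> \<beta>) (\<psi> j)"
      using cc_mono[OF h[rule_format, OF that(3)] \<open>Ns k \<subseteq> N\<close>] .
    have "contiguity_class (Ns k) N' (\<alpha> \<circ> \<phi> i \<circ> \<beta>) (\<alpha> \<circ> \<phi> j \<circ> \<beta>)"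
      using cc_right[OF cc_left[OF Ks(3)[rule_format, OF that] a] bk] .
    then show ?thesis using hi hj cc_trans by blast
  qed
  then show ?thesis unfolding SD_cover_def using sub un by blast
qed

theorem corollary3p8:
  fixes L :: "'a set set" and L' :: "'b set set" and N :: "'c set set" and N' :: "'d set set"
    and \<phi> :: "nat \<Rightarrow> 'a \<Rightarrow> 'b" and \<psi> :: "nat \<Rightarrow> 'c \<Rightarrow> 'd"
    and \<beta> :: "'c \<Rightarrow> 'a" and \<alpha> :: "'b \<Rightarrow> 'd" and m :: nat
  assumes "simplicial_complex L" "simplicial_complex L'"
    and "simplicial_complex N" "simplicial_complex N'"
    and "\<forall>i\<in>{1..m}. simplicial_map L L' (\<phi> i)"
    and "\<forall>i\<in>{1..m}. simplicial_map N N' (\<psi> i)"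
    and "strong_equivalence N L \<beta>"
    and "strong_equivalence L' N' \<alpha>"
    and "\<forall>i\<in>{1..m}. contiguity_class N N' (\<alpha> \<circ> \<phi> i \<circ> \<beta>) (\<psi> i)"
  shows "SD L L' m \<phi> = SD N N' m \<psi>"
proof -
  have b: "simplicial_map N L \<beta>" and a: "simplicial_map L' N' \<alpha>"
    using assms(7,8) unfolding strong_equivalence_def by auto
  obtain b' where b': "simplicial_map L N b'" "contiguity_class L L (\<beta> \<circ> b') id"
    using assms(7) unfolding strong_equivalence_def by auto
  obtain a' where a': "simplicial_map N' L' a'" "contiguity_class L' L' (a' \<circ> \<alpha>) id"
    using assms(8) unfolding strong_equivalence_def by auto
  have h2: "\<forall>i\<in>{1..m}. contiguity_class L L' (a' \<circ> \<psi> i \<circ> b') (\<phi> i)"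
  proof
    fix i assume i: "i \<in> {1..m}"
    have p: "simplicial_map L L' (\<phi> i)" using assms(5) i by auto
    have s1: "contiguity_class L L' (a' \<circ> \<psi> i \<circ> b') (a' \<circ> (\<alpha> \<circ> \<phi> i \<circ> \<beta>) \<circ> b')"
      using cc_right[OF cc_left[OF cc_sym[OF assms(9)[rule_format, OF i]] a'(1)] b'(1)] .
    have pbb: "simplicial_map L L' (\<phi> i \<circ> \<beta> \<circ> b')"
      using cc_left[OF b'(2) p] cc_simp2 unfolding contiguity_class_def comp_assoc by auto
    have s2: "contiguity_class L L' ((a' \<circ> \<alpha>) \<circ> (\<phi> i \<circ> \<beta> \<circ> b')) (id \<circ> (\<phi> i \<circ> \<beta> \<circ> b'))"
      using cc_right[OF a'(2) pbb] .
    have s3: "contiguity_class L L' (\<phi> i \<circ> (\<beta> \<circ> b')) (\<phi> i \<circ> id)"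
      using cc_left[OF b'(2) p] .
    show "contiguity_class L L' (a' \<circ> \<psi> i \<circ> b') (\<phi> i)"
    proof -
      have e1: "a' \<circ> (\<alpha> \<circ> \<phi> i \<circ> \<beta>) \<circ> b' = (a' \<circ> \<alpha>) \<circ> (\<phi> i \<circ> \<beta> \<circ> b')"
        and e2: "id \<circ> (\<phi> i \<circ> \<beta> \<circ> b') = \<phi> i \<circ> (\<beta> \<circ> b')" and e3: "\<phi> i \<circ> id = \<phi> i"
        by (simp_all add: comp_assoc)
      show ?thesis using cc_trans[OF s1[unfolded e1] cc_trans[OF s2[unfolded e2] s3[unfolded e3]]] .
    qed
  qed
  have ps: "\<forall>i\<in>{1..m}. simplicial_map N N' (\<psi> i)" by (fact assms(6))
  have "\<And>n. SD_cover L L' m \<phi> n \<longleftrightarrow> SD_cover N N' m \<psi> n"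
    using transfer_cover[OF assms(3) assms(5) b a assms(9)]
      transfer_cover[OF assms(1) ps b'(1) a'(1) h2] by blast
  then have "SD_cover L L' m \<phi> = SD_cover N N' m \<psi>" by blast
  then show ?thesis unfolding SD_def by simp
qed

end
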